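(* In the real Euclidean plane, let $l_a,l_b,l_c,l_1,l_2,l_3,l_4$ be seven directed lines such that for each $i\in\{1,2,3,4\}$ the line $l_i$ meets each of $l_a,l_b,l_c$ in exactly one point, and put $A_i=l_a\cap l_i$, $B_i=l_b\cap l_i$, $C_i=l_c\cap l_i$. Then, with signed segment lengths, $$\begin{aligned} &A_1A_3\cdot A_2C_2\cdot A_4C_4\cdot B_1C_1\cdot B_2B_4\cdot B_3C_3+A_2A_4\cdot A_1C_1\cdot A_3C_3\cdot B_1B_3\cdot B_2C_2\cdot B_4C_4\\ &=A_3A_4\cdot A_1C_1\cdot A_2C_2\cdot B_1B_2\cdot B_3C_3\cdot B_4C_4+A_2A_3\cdot A_1C_1\cdot A_4C_4\cdot B_1B_4\cdot B_2C_2\cdot B_3C_3\\ &\quad+A_1A_2\cdot A_3C_3\cdot A_4C_4\cdot B_1C_1\cdot B_2C_2\cdot B_3B_4+A_1A_4\cdot A_2C_2\cdot A_3C_3\cdot B_1C_1\cdot B_2B_3\cdot B_4C_4. \end{aligned}$$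
   Context: Each segment $PQ$ appearing above lies on one of the directed lines: $A_iA_j$ on $l_a$, $B_iB_j$ on $l_b$, and $A_iC_i$, $B_iC_i$ on $l_i$. Its signed length $PQ$ equals $|PQ|$ if the direction from $P$ to $Q$ agrees with the direction of the line it lies on, and $-|PQ|$ otherwise (and $0$ if $P=Q$). *)

theory Defs
  imports "HOL-Analysis.Analysis"
begin

text \<open>A directed line in the real plane is given by a base point and a nonzero direction vector.\<close>
type_synonym dline = "(real^2) \<times> (real^2)"

definition is_dline :: "dline \<Rightarrow> bool" where
  "is_dline L \<longleftrightarrow> snd L \<noteq> 0"

definition line_set :: "dline \<Rightarrow> (real^2) set" where
  "line_set L = {fst L + t *\<^sub>R snd L | t. True}"

text \<open>The unique common point of two lines (meaningful when it exists and is unique).\<close>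
definition meet :: "dline \<Rightarrow> dline \<Rightarrow> real^2" where
  "meet L M = (THE P. P \<in> line_set L \<and> P \<in> line_set M)"

definition slen :: "dline \<Rightarrow> real^2 \<Rightarrow> real^2 \<Rightarrow> real" where
  "slen L P Q = (if P = Q then 0
     else if (\<exists>t>0. Q - P = t *\<^sub>R snd L) then dist P Q else - dist P Q)"

end

theory Submission
  imports Defs
begin

definition cr :: "real^2 \<Rightarrow> real^2 \<Rightarrow> real" where
  "cr x y = x$1 * y$2 - x$2 * y$1"

lemma cr_diff: "cr e (a - b) = cr e a - cr e b"
  by (simp add: cr_def algebra_simps)
lemma cr_add: "cr e (a + b) = cr e a + cr e b"
  by (simp add: cr_def algebra_simps)
lemma cr_scale: "cr e (t *\<^sub>R a) = t * cr e a"
  by (simp add: cr_def algebra_simps)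

lemma slen_param:
  assumes "snd L \<noteq> 0" "Q - P = t *\<^sub>R snd L"
  shows "slen L P Q = t * norm (snd L)"
proof -
  have dist: "dist P Q = \<bar>t\<bar> * norm (snd L)"
    using assms(2) by (metis dist_commute dist_norm norm_scaleR)
  consider "t = 0" | "t > 0" | "t < 0" by linarith
  then show ?thesis
  proof cases
    case 1 then show ?thesis using assms by (simp add: slen_def)
  next
    case 2
    then have "P \<noteq> Q" using assms by auto
    then show ?thesis using 2 assms dist by (auto simp: slen_def)
  next
    case 3
    then have "P \<noteq> Q" using assms by auto
    moreover have "\<not> (\<exists>s>0. Q - P = s *\<^sub>R snd L)"
    proof
      assume "\<exists>s>0. Q - P = s *\<^sub>R snd L"
      then obtain s where "s > 0" "Q - P = s *\<^sub>R snd L" by blast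
      then have "s *\<^sub>R snd L = t *\<^sub>R snd L" using assms(2) by metis
      then have "s = t" using assms(1) by (metis scaleR_cancel_right)
      then show False using \<open>s>0\<close> 3 by simp
    qed
    ultimately show ?thesis using 3 dist unfolding slen_def by auto
  qed
qed

lemma meet_in:
  assumes "\<exists>!P. P \<in> line_set M \<and> P \<in> line_set L"
  shows "meet L M \<in> line_set L \<and> meet L M \<in> line_set M"
proof -
  have "\<exists>!P. P \<in> line_set L \<and> P \<in> line_set M" using assms by blast
  from theI'[OF this] show ?thesis unfolding meet_def by blast
qed

lemma ex1_same:
  assumes "\<exists>!x. Q x" "Q a" "Q b" shows "a = b"
proof -
  from assms(1) obtain x where "Q x" "\<forall>y. Q y \<longrightarrow> y = x" by (rule ex1E)
  then show ?thesis using assms(2,3) by metis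
qed

lemma par_mult:
  fixes d e :: "real^2"
  assumes "e \<noteq> 0" "e$1 * d$2 - e$2 * d$1 = 0"
  shows "\<exists>lam. d = lam *\<^sub>R e"
proof (cases "e $ 1 = 0")
  case True
  then have e2: "e $ 2 \<noteq> 0" using assms(1) by (metis exhaust_2 vec_eq_iff zero_index)
  have "d$1 = 0" using True e2 assms(2) by simp
  then have "d = (d$2 / e$2) *\<^sub>R e" using True e2 unfolding vec_eq_iff forall_2 by simp
  then show ?thesis by blast
next
  case False
  have "d$2 = d$1 / e$1 * e$2" using False assms(2) by (simp add: field_simps)
  then have "d = (d$1 / e$1) *\<^sub>R e" using False unfolding vec_eq_iff forall_2 by simp
  then show ?thesis by blast
qed

lemma nonpar:
  assumes "\<exists>!P. P \<in> line_set L \<and> P \<in> line_set M" "snd L \<noteq> 0" "snd M \<noteq> 0"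
  shows "cr (snd M) (snd L) \<noteq> 0"
proof
  assume c: "cr (snd M) (snd L) = 0"
  obtain P where P: "P \<in> line_set L" "P \<in> line_set M" using assms(1) by blast
  obtain s where s: "P = fst M + s *\<^sub>R snd M" using P(2) unfolding line_set_def by blast
  obtain r where r: "P = fst L + r *\<^sub>R snd L" using P(1) unfolding line_set_def by blast
  obtain lam where lam: "snd L = lam *\<^sub>R snd M"
    using par_mult[OF assms(3)] c unfolding cr_def by blast
  have "P + snd L \<in> line_set L" unfolding line_set_def
    by (rule CollectI, rule exI[of _ "r + 1"], simp add: r algebra_simps)
  moreover have "P + snd L \<in> line_set M" unfolding line_set_def
    by (rule CollectI, rule exI[of _ "s + lam"], simp add: s lam algebra_simps)
  ultimately have "P + snd L = P"
    using ex1_same[OF assms(1)] P by blast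
  then show False using assms(2) by simp
qed

lemma side:
  assumes "snd L \<noteq> 0" "P \<in> line_set L" "Q \<in> line_set L" "cr e (snd L) \<noteq> 0"
    "cr e (Q - q) = 0"
  shows "slen L P Q = - cr e (P - q) / cr e (snd L) * norm (snd L)"
proof -
  obtain s where s: "P = fst L + s *\<^sub>R snd L" using assms(2) unfolding line_set_def by blast
  obtain t where t: "Q = fst L + t *\<^sub>R snd L" using assms(3) unfolding line_set_def by blast
  have qp: "Q - P = (t - s) *\<^sub>R snd L" using s t by (simp add: algebra_simps)
  have "cr e (Q - P) = (t - s) * cr e (snd L)" by (simp add: qp cr_scale)
  moreover have "cr e (Q - P) = - cr e (P - q)"
    using assms(5) by (metis cr_diff diff_diff_eq2 diff_add_cancel add_diff_cancel_left' minus_diff_eq diff_zero)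
  ultimately have "t - s = - cr e (P - q) / cr e (snd L)" using assms(4) by (simp add: field_simps)
  then show ?thesis using slen_param[OF assms(1) qp] by simp
qed

lemma core:
  fixes u1 u2 u3 u4 w1 w2 w3 w4 g0 g1 h0 h1 :: real
  shows "(u3-u1) * (g0+g1*u2) * (g0+g1*u4) * (h0+h1 * w1) * (w4-w2) * (h0+h1 * w3)
   + (u4-u2) * (g0+g1*u1) * (g0+g1*u3) * (w3-w1) * (h0+h1 * w2) * (h0+h1 * w4)
  = (u4-u3) * (g0+g1*u1) * (g0+g1*u2) * (w2-w1) * (h0+h1 * w3) * (h0+h1 * w4)
   + (u3-u2) * (g0+g1*u1) * (g0+g1*u4) * (w4-w1) * (h0+h1 * w2) * (h0+h1 * w3)
   + (u2-u1) * (g0+g1*u3) * (g0+g1*u4) * (h0+h1 * w1) * (h0+h1 * w2) * (w4-w3)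
   + (u4-u1) * (g0+g1*u2) * (g0+g1*u3) * (h0+h1 * w1) * (w3-w2) * (h0+h1 * w4)"
  by (simp add: algebra_simps)

lemma alg:
  fixes u1 u2 u3 u4 w1 w2 w3 w4 g0 g1 h0 h1 c1 c2 c3 c4 na nb :: real
  shows "((u3-u1)*na) * ((g0+g1*u2)*c2) * ((g0+g1*u4)*c4) * ((h0+h1 * w1)*c1) * ((w4-w2)*nb) * ((h0+h1 * w3)*c3)
   + ((u4-u2)*na) * ((g0+g1*u1)*c1) * ((g0+g1*u3)*c3) * ((w3-w1)*nb) * ((h0+h1 * w2)*c2) * ((h0+h1 * w4)*c4)
  = ((u4-u3)*na) * ((g0+g1*u1)*c1) * ((g0+g1*u2)*c2) * ((w2-w1)*nb) * ((h0+h1 * w3)*c3) * ((h0+h1 * w4)*c4)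
   + ((u3-u2)*na) * ((g0+g1*u1)*c1) * ((g0+g1*u4)*c4) * ((w4-w1)*nb) * ((h0+h1 * w2)*c2) * ((h0+h1 * w3)*c3)
   + ((u2-u1)*na) * ((g0+g1*u3)*c3) * ((g0+g1*u4)*c4) * ((h0+h1 * w1)*c1) * ((h0+h1 * w2)*c2) * ((w4-w3)*nb)
   + ((u4-u1)*na) * ((g0+g1*u2)*c2) * ((g0+g1*u3)*c3) * ((h0+h1 * w1)*c1) * ((w3-w2)*nb) * ((h0+h1 * w4)*c4)"
proof -
  define K where "K = na*nb*c1*c2*c3*c4"
  have e: "\<And>a b c d e f. (a*na)*(b*c2)*(c*c4)*(d*c1)*(e*nb)*(f*c3) = (a*b*c*d*e*f)*K"
    "\<And>a b c d e f. (a*na)*(b*c1)*(c*c3)*(d*nb)*(e*c2)*(f*c4) = (a*b*c*d*e*f)*K"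
    "\<And>a b c d e f. (a*na)*(b*c1)*(c*c2)*(d*nb)*(e*c3)*(f*c4) = (a*b*c*d*e*f)*K"
    "\<And>a b c d e f. (a*na)*(b*c1)*(c*c4)*(d*nb)*(e*c2)*(f*c3) = (a*b*c*d*e*f)*K"
    "\<And>a b c d e f. (a*na)*(b*c3)*(c*c4)*(d*c1)*(e*c2)*(f*nb) = (a*b*c*d*e*f)*K"
    "\<And>a b c d e f. (a*na)*(b*c2)*(c*c3)*(d*c1)*(e*nb)*(f*c4) = (a*b*c*d*e*f)*K"
    unfolding K_def by (simp_all only: mult_ac)
  show ?thesis by (simp only: e distrib_right[symmetric] core)
qed

theorem theorem11:
  fixes la lb lc :: dline and l :: "nat \<Rightarrow> dline"
    and A B C :: "nat \<Rightarrow> real^2"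
  assumes "is_dline la" "is_dline lb" "is_dline lc"
    and "\<And>i. i \<in> {1,2,3,4} \<Longrightarrow> is_dline (l i)"
    and "\<And>i M. i \<in> {1,2,3,4} \<Longrightarrow> M \<in> {la, lb, lc} \<Longrightarrow>
           \<exists>!P. P \<in> line_set (l i) \<and> P \<in> line_set M"
    and A_def: "\<And>i. A i = meet la (l i)"
    and B_def: "\<And>i. B i = meet lb (l i)"
    and C_def: "\<And>i. C i = meet lc (l i)"
  shows "slen la (A 1) (A 3) * slen (l 2) (A 2) (C 2) * slen (l 4) (A 4) (C 4)
           * slen (l 1) (B 1) (C 1) * slen lb (B 2) (B 4) * slen (l 3) (B 3) (C 3)
         + slen la (A 2) (A 4) * slen (l 1) (A 1) (C 1) * slen (l 3) (A 3) (C 3)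
           * slen lb (B 1) (B 3) * slen (l 2) (B 2) (C 2) * slen (l 4) (B 4) (C 4)
       = slen la (A 3) (A 4) * slen (l 1) (A 1) (C 1) * slen (l 2) (A 2) (C 2)
           * slen lb (B 1) (B 2) * slen (l 3) (B 3) (C 3) * slen (l 4) (B 4) (C 4)
         + slen la (A 2) (A 3) * slen (l 1) (A 1) (C 1) * slen (l 4) (A 4) (C 4)
           * slen lb (B 1) (B 4) * slen (l 2) (B 2) (C 2) * slen (l 3) (B 3) (C 3)
         + slen la (A 1) (A 2) * slen (l 3) (A 3) (C 3) * slen (l 4) (A 4) (C 4)
           * slen (l 1) (B 1) (C 1) * slen (l 2) (B 2) (C 2) * slen lb (B 3) (B 4)
         + slen la (A 1) (A 4) * slen (l 2) (A 2) (C 2) * slen (l 3) (A 3) (C 3)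
           * slen (l 1) (B 1) (C 1) * slen lb (B 2) (B 3) * slen (l 4) (B 4) (C 4)"
proof -
  define ea eb ec where "ea = snd la" "eb = snd lb" "ec = snd lc"
  have ea: "ea \<noteq> 0" and eb: "eb \<noteq> 0" and ec: "ec \<noteq> 0"
    using assms(1-3) unfolding ea_eb_ec_def is_dline_def by auto
  define u where "u i = (SOME t. A i = fst la + t *\<^sub>R ea)" for i
  define w where "w i = (SOME t. B i = fst lb + t *\<^sub>R eb)" for i
  define g0 where "g0 = cr ec (fst la - fst lc)"
  define g1 where "g1 = cr ec ea"
  define h0 where "h0 = cr ec (fst lb - fst lc)"
  define h1 where "h1 = cr ec eb"
  define c where "c i = - norm (snd (l i)) / cr ec (snd (l i))" for i
  have facts: "A i = fst la + u i *\<^sub>R ea \<and> B i = fst lb + w i *\<^sub>R eb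
     \<and> slen (l i) (A i) (C i) = (g0 + g1 * u i) * c i
     \<and> slen (l i) (B i) (C i) = (h0 + h1 * w i) * c i"
    if i: "i \<in> {1,2,3,4}" for i
  proof -
    have di: "snd (l i) \<noteq> 0" using assms(4)[OF i] by (simp add: is_dline_def)
    have eA: "\<exists>!P. P \<in> line_set (l i) \<and> P \<in> line_set la" using assms(5)[OF i] by simp
    have eB: "\<exists>!P. P \<in> line_set (l i) \<and> P \<in> line_set lb" using assms(5)[OF i] by simp
    have eC: "\<exists>!P. P \<in> line_set (l i) \<and> P \<in> line_set lc" using assms(5)[OF i] by simp
    have A: "A i \<in> line_set la \<and> A i \<in> line_set (l i)" using meet_in[OF eA] A_def by simp
    have B: "B i \<in> line_set lb \<and> B i \<in> line_set (l i)" using meet_in[OF eB] B_def by simp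
    have C: "C i \<in> line_set lc \<and> C i \<in> line_set (l i)" using meet_in[OF eC] C_def by simp
    have k: "cr ec (snd (l i)) \<noteq> 0" using nonpar[OF eC di] assms(3) ea_eb_ec_def
      by (simp add: is_dline_def)
    have "\<exists>t. A i = fst la + t *\<^sub>R ea" using A unfolding line_set_def ea_eb_ec_def by blast
    then have uA: "A i = fst la + u i *\<^sub>R ea" unfolding u_def by (rule someI_ex)
    have "\<exists>t. B i = fst lb + t *\<^sub>R eb" using B unfolding line_set_def ea_eb_ec_def by blast
    then have wB: "B i = fst lb + w i *\<^sub>R eb" unfolding w_def by (rule someI_ex)
    obtain t where t: "C i = fst lc + t *\<^sub>R ec" using C unfolding line_set_def ea_eb_ec_def by blast
    have C0: "cr ec (C i - fst lc) = 0" using t by (simp add: cr_def)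
    have gA: "cr ec (A i - fst la + (fst la - fst lc)) = g0 + g1 * u i"
      unfolding uA g0_def g1_def by (simp add: cr_add cr_scale)
    have gB: "cr ec (B i - fst lb + (fst lb - fst lc)) = h0 + h1 * w i"
      unfolding wB h0_def h1_def by (simp add: cr_add cr_scale)
    have x: "slen (l i) (A i) (C i) = (g0 + g1 * u i) * c i"
      using side[OF di conjunct2[OF A] conjunct2[OF C] k C0] gA k
      by (simp add: c_def field_simps)
    have y: "slen (l i) (B i) (C i) = (h0 + h1 * w i) * c i"
      using side[OF di conjunct2[OF B] conjunct2[OF C] k C0] gB k
      by (simp add: c_def field_simps)
    show ?thesis using uA wB x y by blast
  qed
  have sa: "slen la (A j) (A k) = (u k - u j) * norm ea"
    if "j \<in> {1,2,3,4}" "k \<in> {1,2,3,4}" for j k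
  proof -
    have "A k - A j = (u k - u j) *\<^sub>R ea"
      using facts[OF that(1)] facts[OF that(2)] by (simp add: algebra_simps)
    then show ?thesis using slen_param[of la] ea unfolding ea_eb_ec_def by blast
  qed
  have sb: "slen lb (B j) (B k) = (w k - w j) * norm eb"
    if "j \<in> {1,2,3,4}" "k \<in> {1,2,3,4}" for j k
  proof -
    have "B k - B j = (w k - w j) *\<^sub>R eb"
      using facts[OF that(1)] facts[OF that(2)] by (simp add: algebra_simps)
    then show ?thesis using slen_param[of lb] eb unfolding ea_eb_ec_def by blast
  qed
  have f1: "slen (l 1) (A 1) (C 1) = (g0 + g1 * u 1) * c 1" "slen (l 1) (B 1) (C 1) = (h0 + h1 * w 1) * c 1"
    using facts[of 1] by auto
  have f2: "slen (l 2) (A 2) (C 2) = (g0 + g1 * u 2) * c 2" "slen (l 2) (B 2) (C 2) = (h0 + h1 * w 2) * c 2"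
    using facts[of 2] by auto
  have f3: "slen (l 3) (A 3) (C 3) = (g0 + g1 * u 3) * c 3" "slen (l 3) (B 3) (C 3) = (h0 + h1 * w 3) * c 3"
    using facts[of 3] by auto
  have f4: "slen (l 4) (A 4) (C 4) = (g0 + g1 * u 4) * c 4" "slen (l 4) (B 4) (C 4) = (h0 + h1 * w 4) * c 4"
    using facts[of 4] by auto
  have a13: "slen la (A 1) (A 3) = (u 3 - u 1) * norm ea" by (rule sa) auto
  have b13: "slen lb (B 1) (B 3) = (w 3 - w 1) * norm eb" by (rule sb) auto
  have a24: "slen la (A 2) (A 4) = (u 4 - u 2) * norm ea" by (rule sa) auto
  have b24: "slen lb (B 2) (B 4) = (w 4 - w 2) * norm eb" by (rule sb) auto
  have a34: "slen la (A 3) (A 4) = (u 4 - u 3) * norm ea" by (rule sa) auto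
  have b34: "slen lb (B 3) (B 4) = (w 4 - w 3) * norm eb" by (rule sb) auto
  have a23: "slen la (A 2) (A 3) = (u 3 - u 2) * norm ea" by (rule sa) auto
  have b23: "slen lb (B 2) (B 3) = (w 3 - w 2) * norm eb" by (rule sb) auto
  have a12: "slen la (A 1) (A 2) = (u 2 - u 1) * norm ea" by (rule sa) auto
  have b12: "slen lb (B 1) (B 2) = (w 2 - w 1) * norm eb" by (rule sb) auto
  have a14: "slen la (A 1) (A 4) = (u 4 - u 1) * norm ea" by (rule sa) auto
  have b14: "slen lb (B 1) (B 4) = (w 4 - w 1) * norm eb" by (rule sb) auto
  show ?thesis
    unfolding f1 f2 f3 f4 a13 a24 a34 a23 a12 a14 b13 b24 b34 b23 b12 b14
    by (rule alg)
qed

end
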